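(* Let $\beta\colon(Z,Z_0)\to(Z,Z_0)$ be an RTT map of Type 2 and $v_0$ a fixed vertex of $\beta$. Let $\beta_\pi\colon\pi_1(Z,v_0)\to\pi_1(Z,v_0)$, $[a]\mapsto[\beta\circ a]$, and let $(\beta_0)_\pi$ be its restriction to $\pi_1(Z_0',v_0)$, where $Z_0'$ is the component of $Z_0$ containing $v_0$. Then every attracting fixed word of $\beta_\pi$ is equivalent to an attracting fixed word of $(\beta_0)_\pi$.
   Context: A graph map sends vertices to vertices and each edge either locally injectively or to a point. An RTT map of Type 2: $Z$ is a connected finite graph, not a tree, with no vertices of valence 1; $\beta\colon Z\to Z$ is a $\pi_1$-injective graph map all of whose fixed points are vertices; $Z_0$ is a $\beta$-invariant proper subgraph containing all vertices of $Z$; and $\beta$ cyclically permutes the edges of $Z\setminus Z_0$. $\partial\pi_1(Z,v_0)$ is identified with the set of reduced infinite edge paths in $Z$ from $v_0$, and $\partial\pi_1(Z_0',v_0)\subset\partial\pi_1(Z,v_0)$. Attracting fixed words: with respect to a free basis, an infinite word $W$ with $\phi(W)=W$ (boundary extension $\phi(W)=\lim\phi(W_i)$, $W_i$ the length-$i$ prefix) is attracting if $|W\wedge\phi(W_i)|-i\to+\infty$, where $\wedge$ denotes longest common initial segment; fixed infinite words $W,W'$ are equivalent if $W'=UW$ with $U\in\mathrm{Fix}(\beta_\pi)$. *)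

theory Defs
  imports Main
begin

text \<open>Combinatorial finite graphs in the sense of Serre: vertex set V, oriented edge set E,
  source/target maps and a fixed-point-free orientation-reversing involution rv.\<close>

definition graph :: "'v set \<Rightarrow> 'e set \<Rightarrow> ('e \<Rightarrow> 'v) \<Rightarrow> ('e \<Rightarrow> 'v) \<Rightarrow> ('e \<Rightarrow> 'e) \<Rightarrow> bool" where
  "graph V E src tgt rv \<longleftrightarrow> finite V \<and> finite E \<and>
     (\<forall>e\<in>E. src e \<in> V \<and> tgt e \<in> V \<and> rv e \<in> E \<and> rv (rv e) = e \<and> rv e \<noteq> e \<and> src (rv e) = tgt e)"

fun epath :: "'e set \<Rightarrow> ('e \<Rightarrow> 'v) \<Rightarrow> ('e \<Rightarrow> 'v) \<Rightarrow> 'v \<Rightarrow> 'e list \<Rightarrow> 'v \<Rightarrow> bool" where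
  "epath E src tgt v [] w = (v = w)"
| "epath E src tgt v (e # p) w = (e \<in> E \<and> src e = v \<and> epath E src tgt (tgt e) p w)"

definition reduced :: "('e \<Rightarrow> 'e) \<Rightarrow> 'e list \<Rightarrow> bool" where
  "reduced rv p \<longleftrightarrow> (\<forall>i. Suc i < length p \<longrightarrow> p ! Suc i \<noteq> rv (p ! i))"

fun red :: "('e \<Rightarrow> 'e) \<Rightarrow> 'e list \<Rightarrow> 'e list" where
  "red rv [] = []"
| "red rv (e # p) = (case red rv p of [] \<Rightarrow> [e] | f # q \<Rightarrow> (if f = rv e then q else e # f # q))"

definition rev_path :: "('e \<Rightarrow> 'e) \<Rightarrow> 'e list \<Rightarrow> 'e list" where
  "rev_path rv p = rev (map rv p)"

definition connected_graph :: "'v set \<Rightarrow> 'e set \<Rightarrow> ('e \<Rightarrow> 'v) \<Rightarrow> ('e \<Rightarrow> 'v) \<Rightarrow> bool" where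
  "connected_graph V E src tgt \<longleftrightarrow> (\<forall>v\<in>V. \<forall>w\<in>V. \<exists>p. epath E src tgt v p w)"

definition is_tree :: "'v set \<Rightarrow> 'e set \<Rightarrow> ('e \<Rightarrow> 'v) \<Rightarrow> ('e \<Rightarrow> 'v) \<Rightarrow> ('e \<Rightarrow> 'e) \<Rightarrow> bool" where
  "is_tree V E src tgt rv \<longleftrightarrow> connected_graph V E src tgt \<and>
     \<not> (\<exists>v\<in>V. \<exists>p. p \<noteq> [] \<and> reduced rv p \<and> epath E src tgt v p v)"

definition valence :: "'e set \<Rightarrow> ('e \<Rightarrow> 'v) \<Rightarrow> 'v \<Rightarrow> nat" where
  "valence E src v = card {e \<in> E. src e = v}"

text \<open>A graph map: vertices to vertices, each edge to a reduced edge path (locally injective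
  image) or to a point (empty path); compatible with reversal.\<close>
definition graph_map :: "'v set \<Rightarrow> 'e set \<Rightarrow> ('e \<Rightarrow> 'v) \<Rightarrow> ('e \<Rightarrow> 'v) \<Rightarrow> ('e \<Rightarrow> 'e)
     \<Rightarrow> ('v \<Rightarrow> 'v) \<Rightarrow> ('e \<Rightarrow> 'e list) \<Rightarrow> bool" where
  "graph_map V E src tgt rv bV bE \<longleftrightarrow> (\<forall>v\<in>V. bV v \<in> V) \<and>
     (\<forall>e\<in>E. epath E src tgt (bV (src e)) (bE e) (bV (tgt e)) \<and> reduced rv (bE e) \<and>
             bE (rv e) = rev_path rv (bE e))"

definition bstar :: "('e \<Rightarrow> 'e list) \<Rightarrow> 'e list \<Rightarrow> 'e list" where
  "bstar bE p = concat (map bE p)"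

definition pi1 :: "'e set \<Rightarrow> ('e \<Rightarrow> 'v) \<Rightarrow> ('e \<Rightarrow> 'v) \<Rightarrow> ('e \<Rightarrow> 'e) \<Rightarrow> 'v \<Rightarrow> 'e list set" where
  "pi1 E src tgt rv v = {p. epath E src tgt v p v \<and> reduced rv p}"

definition pi1_injective :: "'v set \<Rightarrow> 'e set \<Rightarrow> ('e \<Rightarrow> 'v) \<Rightarrow> ('e \<Rightarrow> 'v) \<Rightarrow> ('e \<Rightarrow> 'e)
     \<Rightarrow> ('e \<Rightarrow> 'e list) \<Rightarrow> bool" where
  "pi1_injective V E src tgt rv bE \<longleftrightarrow>
     (\<forall>v\<in>V. inj_on (\<lambda>p. red rv (bstar bE p)) (pi1 E src tgt rv v))"

text \<open>All fixed points of (the piecewise-linear realization of) the graph map are vertices: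
  on an edge e with image path of length n, the j-th subinterval of length 1/n is mapped
  linearly onto the j-th edge of the image.  An interior fixed point occurs exactly when
  rv e occurs in the image, or e occurs at a position other than the first or last, or
  the image is just [e].\<close>
definition fixed_points_vertices :: "'e set \<Rightarrow> ('e \<Rightarrow> 'e) \<Rightarrow> ('e \<Rightarrow> 'e list) \<Rightarrow> bool" where
  "fixed_points_vertices E rv bE \<longleftrightarrow> (\<forall>e\<in>E. rv e \<notin> set (bE e) \<and>
     (\<forall>j < length (bE e). bE e ! j = e \<longrightarrow>
        2 \<le> length (bE e) \<and> (j = 0 \<or> j = length (bE e) - 1)))"

definition rtt_type2 :: "'v set \<Rightarrow> 'e set \<Rightarrow> ('e \<Rightarrow> 'v) \<Rightarrow> ('e \<Rightarrow> 'v) \<Rightarrow> ('e \<Rightarrow> 'e)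
     \<Rightarrow> 'e set \<Rightarrow> ('v \<Rightarrow> 'v) \<Rightarrow> ('e \<Rightarrow> 'e list) \<Rightarrow> bool" where
  "rtt_type2 V E src tgt rv E0 bV bE \<longleftrightarrow>
     graph V E src tgt rv \<and> connected_graph V E src tgt \<and> \<not> is_tree V E src tgt rv \<and>
     (\<forall>v\<in>V. valence E src v \<noteq> 1) \<and>
     graph_map V E src tgt rv bV bE \<and> pi1_injective V E src tgt rv bE \<and>
     fixed_points_vertices E rv bE \<and>
     \<comment> \<open>Z_0: proper, beta-invariant subgraph containing all vertices\<close>
     E0 \<subseteq> E \<and> E0 \<noteq> E \<and> (\<forall>e\<in>E0. rv e \<in> E0) \<and> (\<forall>e\<in>E0. set (bE e) \<subseteq> E0) \<and>
     \<comment> \<open>beta cyclically permutes the edges of Z minus Z_0\<close>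
     (\<forall>e\<in>E - E0. \<exists>f\<in>E - E0. bE e = [f]) \<and>
     (\<forall>e\<in>E - E0. \<forall>e'\<in>E - E0. \<exists>n. ((\<lambda>x. hd (bE x)) ^^ n) e \<in> {e', rv e'})"

text \<open>Reduced infinite edge paths from v (points of the boundary of pi_1).\<close>
definition inf_path :: "'e set \<Rightarrow> ('e \<Rightarrow> 'v) \<Rightarrow> ('e \<Rightarrow> 'v) \<Rightarrow> ('e \<Rightarrow> 'e) \<Rightarrow> 'v \<Rightarrow> (nat \<Rightarrow> 'e) \<Rightarrow> bool" where
  "inf_path E src tgt rv v W \<longleftrightarrow> (\<forall>n. W n \<in> E) \<and> src (W 0) = v \<and>
     (\<forall>n. tgt (W n) = src (W (Suc n))) \<and> (\<forall>n. W (Suc n) \<noteq> rv (W n))"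

definition prefix :: "nat \<Rightarrow> (nat \<Rightarrow> 'e) \<Rightarrow> 'e list" where
  "prefix n W = map W [0..<n]"

definition converges_to :: "(nat \<Rightarrow> 'e list) \<Rightarrow> (nat \<Rightarrow> 'e) \<Rightarrow> bool" where
  "converges_to ps X \<longleftrightarrow> (\<forall>k. \<exists>N. \<forall>n\<ge>N. k \<le> length (ps n) \<and> (\<forall>j<k. ps n ! j = X j))"

definition cpl :: "(nat \<Rightarrow> 'e) \<Rightarrow> 'e list \<Rightarrow> nat" where
  "cpl W p = length (takeWhile id (map (\<lambda>j. p ! j = W j) [0..<length p]))"

definition attracting_fixed_word :: "'e set \<Rightarrow> ('e \<Rightarrow> 'v) \<Rightarrow> ('e \<Rightarrow> 'v) \<Rightarrow> ('e \<Rightarrow> 'e)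
     \<Rightarrow> ('e \<Rightarrow> 'e list) \<Rightarrow> 'v \<Rightarrow> (nat \<Rightarrow> 'e) \<Rightarrow> bool" where
  "attracting_fixed_word E src tgt rv bE v W \<longleftrightarrow> inf_path E src tgt rv v W \<and>
     converges_to (\<lambda>i. red rv (bstar bE (prefix i W))) W \<and>
     filterlim (\<lambda>i. int (cpl W (red rv (bstar bE (prefix i W)))) - int i) at_top sequentially"

text \<open>X = U W (boundary action of U in pi_1 on the infinite word W).\<close>
definition is_product :: "('e \<Rightarrow> 'e) \<Rightarrow> 'e list \<Rightarrow> (nat \<Rightarrow> 'e) \<Rightarrow> (nat \<Rightarrow> 'e) \<Rightarrow> bool" where
  "is_product rv U W X \<longleftrightarrow> converges_to (\<lambda>n. red rv (U @ prefix n W)) X"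

end

theory Submission
  imports Defs
begin

inductive emb :: "'a list \<Rightarrow> 'a list \<Rightarrow> bool" where
  emb_Nil: "emb [] ys"
| emb_skip: "emb xs ys \<Longrightarrow> emb xs (y # ys)"
| emb_take: "emb xs ys \<Longrightarrow> emb (x # xs) (x # ys)"

lemma emb_length: "emb xs ys \<Longrightarrow> length xs \<le> length ys"
  by (induction rule: emb.induct) auto

lemma emb_eq: "emb xs ys \<Longrightarrow> length xs = length ys \<Longrightarrow> xs = ys"
proof (induction rule: emb.induct)
  case (emb_skip xs ys y)
  then have "length xs \<le> length ys" using emb_length by blast
  then show ?case using emb_skip by simp
qed auto

lemma emb_filter: "emb xs ys \<Longrightarrow> emb (filter P xs) (filter P ys)"
  by (induction rule: emb.induct) (auto intro: emb.intros)

lemma emb_tl: "emb xs ys \<Longrightarrow> emb (tl xs) ys"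
  by (induction rule: emb.induct) (auto intro: emb.intros)

lemma emb_red: "emb (red rv p) p"
proof (induction p)
  case Nil
  then show ?case by (simp add: emb_Nil)
next
  case (Cons e p)
  show ?case
  proof (cases "red rv p")
    case Nil
    then show ?thesis by (simp add: emb.intros)
  next
    case (Cons f q)
    have h: "emb (f # q) p" using Cons.IH Cons by simp
    have "emb q p" using emb_tl[OF h] by simp
    then show ?thesis using h Cons by (auto intro: emb.intros)
  qed
qed

lemma red_reduced: "reduced rv p \<Longrightarrow> red rv p = p"
proof (induction p)
  case Nil then show ?case by simp
next
  case (Cons e p)
  have rp: "reduced rv p" using Cons.prems unfolding reduced_def
    by (metis Suc_less_eq length_Cons nth_Cons_Suc)
  show ?case
  proof (cases p)
    case Nil then show ?thesis by simp
  next
    case (Cons f q)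
    have "f \<noteq> rv e" using Cons.prems Cons unfolding reduced_def by force
    then show ?thesis using Cons.IH[OF rp] Cons by simp
  qed
qed

lemma filter_bstar:
  assumes "set p \<subseteq> E" "\<forall>e\<in>E0. set (bE e) \<subseteq> E0" "\<forall>e\<in>E - E0. \<exists>f\<in>E - E0. bE e = [f]"
  shows "filter (\<lambda>x. x \<notin> E0) (bstar bE p) = map (\<lambda>x. hd (bE x)) (filter (\<lambda>x. x \<notin> E0) p)"
  using assms(1)
proof (induction p)
  case Nil then show ?case by (simp add: bstar_def)
next
  case (Cons e p)
  have IH: "filter (\<lambda>x. x \<notin> E0) (bstar bE p) = map (\<lambda>x. hd (bE x)) (filter (\<lambda>x. x \<notin> E0) p)"
    using Cons by simp
  have bs: "bstar bE (e # p) = bE e @ bstar bE p" by (simp add: bstar_def)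
  show ?case
  proof (cases "e \<in> E0")
    case True
    then have "filter (\<lambda>x. x \<notin> E0) (bE e) = []" using assms(2) by (auto simp: filter_empty_conv)
    then show ?thesis using bs IH True by simp
  next
    case False
    then obtain f where "f \<in> E - E0" "bE e = [f]" using assms(3) Cons.prems by auto
    then show ?thesis using bs IH False by simp
  qed
qed

lemma prefix_Suc: "prefix (Suc i) W = prefix i W @ [W i]"
  by (simp add: prefix_def)

lemma cpl_ge: "m \<le> cpl W p \<Longrightarrow> m \<le> length p \<and> (\<forall>j<m. p ! j = W j)"
proof -
  assume m: "m \<le> cpl W p"
  let ?xs = "map (\<lambda>j. p ! j = W j) [0..<length p]"
  have l: "cpl W p \<le> length p" unfolding cpl_def
    by (metis length_map length_takeWhile_le diff_zero length_upt)
  have "\<forall>j<m. p ! j = W j"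
  proof (intro allI impI)
    fix j assume "j < m"
    then have j: "j < length (takeWhile id ?xs)" using m unfolding cpl_def by simp
    then have "id (?xs ! j)"
      by (metis nth_mem set_takeWhileD takeWhile_nth)
    moreover have "j < length p" using j l m unfolding cpl_def by simp
    ultimately show "p ! j = W j" by simp
  qed
  then show ?thesis using l m by simp
qed

theorem lemma4p4:
  fixes V :: "'v set" and E :: "'e set" and src tgt :: "'e \<Rightarrow> 'v" and rv :: "'e \<Rightarrow> 'e"
    and E0 :: "'e set" and bV :: "'v \<Rightarrow> 'v" and bE :: "'e \<Rightarrow> 'e list"
    and v0 :: 'v and W :: "nat \<Rightarrow> 'e"
  assumes "rtt_type2 V E src tgt rv E0 bV bE"
    and "v0 \<in> V" and "bV v0 = v0"
    and "attracting_fixed_word E src tgt rv bE v0 W"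
  shows "\<exists>U W'. U \<in> pi1 E src tgt rv v0 \<and> red rv (bstar bE U) = U \<and>
           attracting_fixed_word E0 src tgt rv bE v0 W' \<and> is_product rv U W W'"
proof -
  have inv: "\<forall>e\<in>E0. set (bE e) \<subseteq> E0" and perm: "\<forall>e\<in>E - E0. \<exists>f\<in>E - E0. bE e = [f]"
    and fpv: "fixed_points_vertices E rv bE"
    using assms(1) unfolding rtt_type2_def by auto
  have ip: "inf_path E src tgt rv v0 W" using assms(4) unfolding attracting_fixed_word_def by simp
  have WE: "\<And>n. W n \<in> E" using ip unfolding inf_path_def by simp
  have conv: "converges_to (\<lambda>i. red rv (bstar bE (prefix i W))) W"
    and lim: "filterlim (\<lambda>i. int (cpl W (red rv (bstar bE (prefix i W)))) - int i) at_top sequentially"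
    using assms(4) unfolding attracting_fixed_word_def by auto
  define F where "F = filter (\<lambda>x. x \<notin> E0)"
  define f where "f = (\<lambda>x. hd (bE x))"
  define q where "q = (\<lambda>i. red rv (bstar bE (prefix i W)))"
  have "\<forall>\<^sub>F i in sequentially. 1 \<le> int (cpl W (q i)) - int i"
    using lim unfolding filterlim_at_top q_def by blast
  then obtain N where N: "\<And>i. i \<ge> N \<Longrightarrow> 1 \<le> int (cpl W (q i)) - int i"
    unfolding eventually_sequentially by blast
  have setpre: "set (prefix i W) \<subseteq> E" for i using WE unfolding prefix_def by auto
  have key: "W i \<in> E0 \<and> F (prefix i W) = map f (F (prefix i W))" if "i \<ge> N" for i
  proof -
    have "Suc i \<le> cpl W (q i)" using N[OF that] by simp
    from cpl_ge[OF this] have l: "Suc i \<le> length (q i)" and a: "\<forall>j<Suc i. q i ! j = W j" by auto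
    have tk: "take (Suc i) (q i) = prefix (Suc i) W"
      by (rule nth_equalityI) (use l a in \<open>auto simp: prefix_def simp del: upt_Suc\<close>)
    define L where "L = F (prefix i W)"
    have Fq: "F (q i) = F (prefix (Suc i) W) @ F (drop (Suc i) (q i))"
      by (metis tk F_def append_take_drop_id filter_append)
    have e1: "emb (F (q i)) (map f L)"
      using emb_filter[OF emb_red[of rv "bstar bE (prefix i W)"], of "\<lambda>x. x \<notin> E0"]
        filter_bstar[OF setpre inv perm]
      unfolding q_def F_def L_def f_def by simp
    have len1: "length (F (q i)) \<le> length L" using emb_length[OF e1] by simp
    have len2: "length (F (prefix (Suc i) W)) \<le> length (F (q i))" using Fq by simp
    have ps: "F (prefix (Suc i) W) = L @ (if W i \<notin> E0 then [W i] else [])"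
      unfolding L_def F_def prefix_Suc by simp
    have WiE0: "W i \<in> E0"
    proof (rule ccontr)
      assume "W i \<notin> E0"
      then show False using ps len1 len2 by simp
    qed
    then have ps': "F (prefix (Suc i) W) = L" using ps by simp
    have "length (F (q i)) = length (map f L)" using len1 len2 ps' by simp
    then have eq: "F (q i) = map f L" using emb_eq[OF e1] by simp
    have "L = F (q i)" using Fq ps' \<open>length (F (q i)) = length (map f L)\<close> by simp
    then show ?thesis using WiE0 eq L_def by simp
  qed
  have empty: "F (prefix i W) = []" if "i \<ge> N" for i
  proof (rule ccontr)
    assume ne: "F (prefix i W) \<noteq> []"
    let ?L = "F (prefix i W)"
    have hL: "hd ?L = f (hd ?L)" using key[OF that] ne by (metis list.map_sel(1))
    have "hd ?L \<in> set ?L" using ne by simp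
    then have e: "hd ?L \<in> E - E0" using setpre[of i] unfolding F_def by auto
    then obtain g where g: "bE (hd ?L) = [g]" using perm by blast
    then have "g = hd ?L" using hL unfolding f_def by simp
    then have "bE (hd ?L) ! 0 = hd ?L" using g by simp
    then show False using fpv e g unfolding fixed_points_vertices_def by fastforce
  qed
  have allE0: "W m \<in> E0" for m
  proof -
    have "W m \<in> set (prefix (max N (Suc m)) W)" unfolding prefix_def by auto
    then show ?thesis using empty[of "max N (Suc m)"] unfolding F_def
      by (metis (mono_tags, lifting) empty_filter_conv max.cobounded1)
  qed
  have redpre: "red rv (prefix n W) = prefix n W" for n
  proof (rule red_reduced)
    show "reduced rv (prefix n W)" unfolding reduced_def prefix_def using ip
      unfolding inf_path_def by simp
  qed
  have "converges_to (\<lambda>n. red rv ([] @ prefix n W)) W"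
    unfolding converges_to_def append_Nil redpre
  proof
    fix k show "\<exists>N. \<forall>n\<ge>N. k \<le> length (prefix n W) \<and> (\<forall>j<k. prefix n W ! j = W j)"
      by (rule exI[of _ k]) (auto simp: prefix_def)
  qed
  moreover have "attracting_fixed_word E0 src tgt rv bE v0 W"
    using assms(4) allE0 unfolding attracting_fixed_word_def inf_path_def by auto
  moreover have "[] \<in> pi1 E src tgt rv v0" unfolding pi1_def reduced_def by simp
  moreover have "red rv (bstar bE []) = []" by (simp add: bstar_def)
  ultimately show ?thesis unfolding is_product_def by blast
qed

end
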